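(* Fix a Markov policy $\pi$, action thresholds $\{C^{\mathbf a}_h\}$ (hence a fixed pseudo-policy $\bar\pi$), and two sets of state thresholds $\{C^{\mathbf x}_h\}$, $\{(C^{\mathbf x}_h)'\}$. Let $\bar d^\pi_0=(\bar d^\pi_0)'=d_0$ and for $h\ge1$, $\bar d^\pi_h=\mathbf P^{\bar\pi}_{h-1}(\bar d^\pi_{h-1}\wedge C^{\mathbf x}_{h-1}d^D_{h-1})$, $(\bar d^\pi_h)'=\mathbf P^{\bar\pi}_{h-1}((\bar d^\pi_{h-1})'\wedge(C^{\mathbf x}_{h-1})'d^D_{h-1})$. Then for each $h\in[H]$: (1) (Monotonicity) if $C^{\mathbf x}_{h'}\le(C^{\mathbf x}_{h'})'$ for all $h'<h$ then $\bar d^\pi_h\le(\bar d^\pi_h)'$; and if $C^{\mathbf x}_{h'}\ge(C^{\mathbf x}_{h'})'$ for all $h'<h$ then $\bar d^\pi_h\ge(\bar d^\pi_h)'$. (2) $\|(\bar d^\pi_h)'-\bar d^\pi_h\|_1\le\sum_{h'<h}|(C^{\mathbf x}_{h'})'-C^{\mathbf x}_{h'}|$. (3) $\big|\|d^\pi_h-(\bar d^\pi_h)'\|_1-\|d^\pi_h-\bar d^\pi_h\|_1\big|\le\sum_{h'<h}|(C^{\mathbf x}_{h'})'-C^{\mathbf x}_{h'}|$.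
   Context: Setting: finite-horizon episodic MDP, measurable state space $\mathcal X$, finite action space $\mathcal A$, $[H]=\{0,\dots,H-1\}$, transitions $P_h$, initial distribution $d_0$; $d^\pi_h$ is the density of $x_h$ under $\pi$. Offline data: $\mathcal D_h$ consists of tuples $(x_h,a_h,x_{h+1})$ generated by an arbitrary roll-in to $x_h$, then $a_h\sim\pi^D_h(\cdot\mid x_h)$ for a Markov single-step policy $\pi^D_h$, then $x_{h+1}\sim P_h$; $d^D_h\in\Delta(\mathcal X)$ is the marginal density of $x_h$ in $\mathcal D_h$. Notation: $a\wedge b=\min(a,b)$ pointwise; $(\mathbf P^{\bar\pi}_hd)(x'):=\iint P_h(x'\mid x,a)\bar\pi_h(a\mid x)d(x)\mathrm dx\,\mathrm da$; the pseudo-policy is $\bar\pi_h:=\pi_h\wedge C^{\mathbf a}_h\pi^D_h$. *)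

theory Defs
  imports "HOL-Probability.Probability"
begin

text \<open>States: type 'x with reference measure M (densities are w.r.t. M).
  Actions: a finite type 'a.  Transition densities: Ph x a x' = P_h(x' | x, a).
  Policies: pol x a = pol(a | x).\<close>

definition Pop :: "'x measure \<Rightarrow> ('x \<Rightarrow> 'a::finite \<Rightarrow> 'x \<Rightarrow> real)
    \<Rightarrow> ('x \<Rightarrow> 'a \<Rightarrow> real) \<Rightarrow> ('x \<Rightarrow> real) \<Rightarrow> 'x \<Rightarrow> real" where
  "Pop M Ph pol d x' = (\<integral>x. (\<Sum>a\<in>UNIV. Ph x a x' * pol x a) * d x \<partial>M)"

definition pseudo_policy :: "(nat \<Rightarrow> 'x \<Rightarrow> 'a \<Rightarrow> real) \<Rightarrow> (nat \<Rightarrow> 'x \<Rightarrow> 'a \<Rightarrow> real)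
    \<Rightarrow> (nat \<Rightarrow> real) \<Rightarrow> nat \<Rightarrow> 'x \<Rightarrow> 'a \<Rightarrow> real" where
  "pseudo_policy pol piD Ca h x a = min (pol h x a) (Ca h * piD h x a)"

primrec dbar :: "'x measure \<Rightarrow> (nat \<Rightarrow> 'x \<Rightarrow> 'a::finite \<Rightarrow> 'x \<Rightarrow> real)
    \<Rightarrow> (nat \<Rightarrow> 'x \<Rightarrow> 'a \<Rightarrow> real) \<Rightarrow> ('x \<Rightarrow> real) \<Rightarrow> (nat \<Rightarrow> 'x \<Rightarrow> real)
    \<Rightarrow> (nat \<Rightarrow> real) \<Rightarrow> nat \<Rightarrow> 'x \<Rightarrow> real" where
  "dbar M P pibar d0 dD Cx 0 = d0"
| "dbar M P pibar d0 dD Cx (Suc h) =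
     Pop M (P h) (pibar h) (\<lambda>x. min (dbar M P pibar d0 dD Cx h x) (Cx h * dD h x))"

primrec dpi :: "'x measure \<Rightarrow> (nat \<Rightarrow> 'x \<Rightarrow> 'a::finite \<Rightarrow> 'x \<Rightarrow> real)
    \<Rightarrow> (nat \<Rightarrow> 'x \<Rightarrow> 'a \<Rightarrow> real) \<Rightarrow> ('x \<Rightarrow> real) \<Rightarrow> nat \<Rightarrow> 'x \<Rightarrow> real" where
  "dpi M P pol d0 0 = d0"
| "dpi M P pol d0 (Suc h) = Pop M (P h) (pol h) (dpi M P pol d0 h)"

definition l1norm :: "'x measure \<Rightarrow> ('x \<Rightarrow> real) \<Rightarrow> real" where
  "l1norm M f = (\<integral>x. \<bar>f x\<bar> \<partial>M)"

end

theory Submission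
  imports Defs
begin

lemma kernel_int:
  fixes K :: "'x \<Rightarrow> 'x \<Rightarrow> real"
  assumes sf: "sigma_finite_measure M"
  and Km: "(\<lambda>(x,x'). K x x') \<in> borel_measurable (M \<Otimes>\<^sub>M M)"
  and Kn: "\<And>x x'. x \<in> space M \<Longrightarrow> x' \<in> space M \<Longrightarrow> 0 \<le> K x x'"
  and Ki: "\<And>x. x \<in> space M \<Longrightarrow> integrable M (K x)"
  and K1: "\<And>x. x \<in> space M \<Longrightarrow> (\<integral>x'. K x x' \<partial>M) \<le> 1"
  and g: "integrable M g"
  shows "integrable (M \<Otimes>\<^sub>M M) (\<lambda>(x,x'). K x x' * g x)"
proof -
  interpret sigma_finite_measure M by (rule sf)
  have gm[measurable]: "g \<in> borel_measurable M" using g by (rule borel_measurable_integrable)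
  have Km'[measurable]: "(\<lambda>p. K (fst p) (snd p)) \<in> borel_measurable (M \<Otimes>\<^sub>M M)"
    using Km by (simp add: case_prod_beta')
  have Kxm[measurable]: "\<And>x. x \<in> space M \<Longrightarrow> K x \<in> borel_measurable M"
    using Ki by (rule borel_measurable_integrable)
  have meas: "(\<lambda>(x,x'). K x x' * g x) \<in> borel_measurable (M \<Otimes>\<^sub>M M)"
    unfolding case_prod_beta' by measurable
  have "(\<integral>\<^sup>+p. ennreal (norm ((\<lambda>(x,x'). K x x' * g x) p)) \<partial>(M \<Otimes>\<^sub>M M))
       = (\<integral>\<^sup>+x. \<integral>\<^sup>+x'. ennreal (norm (K x x' * g x)) \<partial>M \<partial>M)"
    by (subst nn_integral_fst[symmetric]) (use meas in auto)
  also have "\<dots> \<le> (\<integral>\<^sup>+x. ennreal (norm (g x)) \<partial>M)"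
  proof (rule nn_integral_mono)
    fix x assume x: "x \<in> space M"
    have "(\<integral>\<^sup>+x'. ennreal (norm (K x x' * g x)) \<partial>M) = (\<integral>\<^sup>+x'. ennreal (norm (g x)) * ennreal (K x x') \<partial>M)"
      by (rule nn_integral_cong) (use x Kn in \<open>auto simp: abs_mult ennreal_mult' mult.commute\<close>)
    also have "\<dots> = ennreal (norm (g x)) * (\<integral>\<^sup>+x'. ennreal (K x x') \<partial>M)"
      by (rule nn_integral_cmult) (use x in measurable)
    also have "(\<integral>\<^sup>+x'. ennreal (K x x') \<partial>M) = ennreal (\<integral>x'. K x x' \<partial>M)"
      by (rule nn_integral_eq_integral) (use x Ki Kn in auto)
    also have "ennreal (norm (g x)) * ennreal (\<integral>x'. K x x' \<partial>M) \<le> ennreal (norm (g x)) * 1"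
      by (intro mult_left_mono) (use x K1 in auto)
    finally show "(\<integral>\<^sup>+x'. ennreal (norm (K x x' * g x)) \<partial>M) \<le> ennreal (norm (g x))" by simp
  qed
  also have "\<dots> < \<infinity>" using g by (simp add: integrable_iff_bounded)
  finally show ?thesis using meas by (simp add: integrable_iff_bounded)
qed

lemma kernel_props:
  fixes K :: "'x \<Rightarrow> 'x \<Rightarrow> real"
  assumes sf: "sigma_finite_measure M"
  and Km: "(\<lambda>(x,x'). K x x') \<in> borel_measurable (M \<Otimes>\<^sub>M M)"
  and Kn: "\<And>x x'. x \<in> space M \<Longrightarrow> x' \<in> space M \<Longrightarrow> 0 \<le> K x x'"
  and Ki: "\<And>x. x \<in> space M \<Longrightarrow> integrable M (K x)"
  and K1: "\<And>x. x \<in> space M \<Longrightarrow> (\<integral>x'. K x x' \<partial>M) \<le> 1"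
  and g: "integrable M g"
  shows "integrable M (\<lambda>x'. \<integral>x. K x x' * g x \<partial>M)"
    and "AE x' in M. integrable M (\<lambda>x. K x x' * g x)"
    and "(\<integral>x'. \<bar>\<integral>x. K x x' * g x \<partial>M\<bar> \<partial>M) \<le> (\<integral>x. \<bar>g x\<bar> \<partial>M)"
proof -
  interpret P: pair_sigma_finite M M using sf by (simp add: pair_sigma_finite_def)
  have I: "integrable (M \<Otimes>\<^sub>M M) (\<lambda>(x,x'). K x x' * g x)"
    by (rule kernel_int[OF assms])
  show "integrable M (\<lambda>x'. \<integral>x. K x x' * g x \<partial>M)"
    using P.integrable_snd[of "\<lambda>x x'. K x x' * g x"] I by simp
  show "AE x' in M. integrable M (\<lambda>x. K x x' * g x)"
    using P.AE_integrable_snd[of "\<lambda>x x'. K x x' * g x"] I by simp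
  have gm[measurable]: "g \<in> borel_measurable M" using g by (rule borel_measurable_integrable)
  have Ia: "integrable (M \<Otimes>\<^sub>M M) (\<lambda>(x,x'). \<bar>K x x' * g x\<bar>)"
    using integrable_abs[OF I] by (simp add: case_prod_beta')
  have "(\<integral>x'. \<bar>\<integral>x. K x x' * g x \<partial>M\<bar> \<partial>M) \<le> (\<integral>x'. \<integral>x. \<bar>K x x' * g x\<bar> \<partial>M \<partial>M)"
    apply (rule integral_mono)
    using P.integrable_snd[of "\<lambda>x x'. K x x' * g x"] I apply (simp add: integrable_abs)
    using P.integrable_snd[of "\<lambda>x x'. \<bar>K x x' * g x\<bar>"] Ia apply simp
    by simp
  also have "\<dots> = (\<integral>x. \<integral>x'. \<bar>K x x' * g x\<bar> \<partial>M \<partial>M)"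
    using P.Fubini_integral[of "\<lambda>x x'. \<bar>K x x' * g x\<bar>"] Ia by simp
  also have "\<dots> \<le> (\<integral>x. \<bar>g x\<bar> \<partial>M)"
  proof (rule integral_mono)
    show "integrable M (\<lambda>x. \<integral>x'. \<bar>K x x' * g x\<bar> \<partial>M)"
      using P.integrable_fst[of "\<lambda>x x'. \<bar>K x x' * g x\<bar>"] Ia by simp
    show "integrable M (\<lambda>x. \<bar>g x\<bar>)" using g by simp
    fix x assume x: "x \<in> space M"
    have "(\<integral>x'. \<bar>K x x' * g x\<bar> \<partial>M) = (\<integral>x'. K x x' * \<bar>g x\<bar> \<partial>M)"
      by (rule Bochner_Integration.integral_cong[OF refl]) (use x Kn in \<open>auto simp: abs_mult\<close>)
    also have "\<dots> = (\<integral>x'. K x x' \<partial>M) * \<bar>g x\<bar>" by simp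
    also have "\<dots> \<le> 1 * \<bar>g x\<bar>" by (intro mult_right_mono) (use x K1 in auto)
    finally show "(\<integral>x'. \<bar>K x x' * g x\<bar> \<partial>M) \<le> \<bar>g x\<bar>" by simp
  qed
  finally show "(\<integral>x'. \<bar>\<integral>x. K x x' * g x \<partial>M\<bar> \<partial>M) \<le> (\<integral>x. \<bar>g x\<bar> \<partial>M)" .
qed

lemma Pop_props:
  fixes Ph :: "'x \<Rightarrow> 'a::finite \<Rightarrow> 'x \<Rightarrow> real" and q :: "'x \<Rightarrow> 'a \<Rightarrow> real"
  assumes sf: "sigma_finite_measure M"
  and Pm: "\<And>a. (\<lambda>(x, x'). Ph x a x') \<in> borel_measurable (M \<Otimes>\<^sub>M M)"
  and Pn: "\<And>x a x'. x \<in> space M \<Longrightarrow> x' \<in> space M \<Longrightarrow> 0 \<le> Ph x a x'"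
  and Pi: "\<And>x a. x \<in> space M \<Longrightarrow> integrable M (Ph x a)"
  and P1: "\<And>x a. x \<in> space M \<Longrightarrow> (\<integral>x'. Ph x a x' \<partial>M) = 1"
  and qm: "\<And>a. (\<lambda>x. q x a) \<in> borel_measurable M"
  and qn: "\<And>x a. x \<in> space M \<Longrightarrow> 0 \<le> q x a"
  and qs: "\<And>x. x \<in> space M \<Longrightarrow> (\<Sum>a\<in>UNIV. q x a) \<le> 1"
  and d: "integrable M d"
  shows "integrable M (Pop M Ph q d)"
    and "AE x' in M. integrable M (\<lambda>x. (\<Sum>a\<in>UNIV. Ph x a x' * q x a) * d x)"
    and "l1norm M (Pop M Ph q d) \<le> l1norm M d"
proof -
  define K where "K = (\<lambda>x x'. \<Sum>a\<in>UNIV. Ph x a x' * q x a)"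
  have Pm'[measurable]: "\<And>a. (\<lambda>p. Ph (fst p) a (snd p)) \<in> borel_measurable (M \<Otimes>\<^sub>M M)"
    using Pm by (simp add: case_prod_beta')
  have [measurable]: "\<And>a. (\<lambda>x. q x a) \<in> borel_measurable M" by (rule qm)
  have Km: "(\<lambda>(x,x'). K x x') \<in> borel_measurable (M \<Otimes>\<^sub>M M)"
    unfolding K_def case_prod_beta' by measurable
  have Kn: "\<And>x x'. x \<in> space M \<Longrightarrow> x' \<in> space M \<Longrightarrow> 0 \<le> K x x'"
    unfolding K_def by (intro sum_nonneg mult_nonneg_nonneg Pn qn)
  have Ki: "\<And>x. x \<in> space M \<Longrightarrow> integrable M (K x)"
    unfolding K_def
  proof -
    fix x assume x: "x \<in> space M"
    show "integrable M (\<lambda>x'. \<Sum>a\<in>UNIV. Ph x a x' * q x a)"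
      by (auto intro!: integrable_sum integrable_mult_left Pi[OF x])
  qed
  have K1: "\<And>x. x \<in> space M \<Longrightarrow> (\<integral>x'. K x x' \<partial>M) \<le> 1"
  proof -
    fix x assume x: "x \<in> space M"
    have "(\<integral>x'. K x x' \<partial>M) = (\<Sum>a\<in>UNIV. (\<integral>x'. Ph x a x' \<partial>M) * q x a)"
      unfolding K_def using x by (subst Bochner_Integration.integral_sum) (auto intro!: Pi[OF x] integrable_mult_left)
    also have "\<dots> = (\<Sum>a\<in>UNIV. q x a)" using P1 x by simp
    finally show "(\<integral>x'. K x x' \<partial>M) \<le> 1" using qs x by simp
  qed
  note KP = kernel_props[OF sf Km Kn Ki K1 d]
  show "integrable M (Pop M Ph q d)"
    using KP(1) unfolding Pop_def K_def .
  show "AE x' in M. integrable M (\<lambda>x. (\<Sum>a\<in>UNIV. Ph x a x' * q x a) * d x)"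
    using KP(2) unfolding K_def .
  show "l1norm M (Pop M Ph q d) \<le> l1norm M d"
    using KP(3) unfolding Pop_def l1norm_def K_def by simp
qed

locale kern =
  fixes M :: "'x measure" and Ph :: "'x \<Rightarrow> 'a::finite \<Rightarrow> 'x \<Rightarrow> real" and q :: "'x \<Rightarrow> 'a \<Rightarrow> real"
  assumes sf: "sigma_finite_measure M"
  and Pm: "\<And>a. (\<lambda>(x, x'). Ph x a x') \<in> borel_measurable (M \<Otimes>\<^sub>M M)"
  and Pn: "\<And>x a x'. x \<in> space M \<Longrightarrow> x' \<in> space M \<Longrightarrow> 0 \<le> Ph x a x'"
  and Pi: "\<And>x a. x \<in> space M \<Longrightarrow> integrable M (Ph x a)"
  and P1: "\<And>x a. x \<in> space M \<Longrightarrow> (\<integral>x'. Ph x a x' \<partial>M) = 1"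
  and qm: "\<And>a. (\<lambda>x. q x a) \<in> borel_measurable M"
  and qn: "\<And>x a. x \<in> space M \<Longrightarrow> 0 \<le> q x a"
  and qs: "\<And>x. x \<in> space M \<Longrightarrow> (\<Sum>a\<in>UNIV. q x a) \<le> 1"
begin

lemma props:
  assumes d: "integrable M d"
  shows "integrable M (Pop M Ph q d)"
    and "AE x' in M. integrable M (\<lambda>x. (\<Sum>a\<in>UNIV. Ph x a x' * q x a) * d x)"
    and "l1norm M (Pop M Ph q d) \<le> l1norm M d"
  using Pop_props[of M Ph q d, OF sf Pm Pn Pi P1 qm qn qs d] by auto

lemma int: "integrable M d \<Longrightarrow> integrable M (Pop M Ph q d)"
  by (rule props(1))

lemma nonneg: "(\<And>x. x \<in> space M \<Longrightarrow> 0 \<le> d x) \<Longrightarrow> x' \<in> space M \<Longrightarrow> 0 \<le> Pop M Ph q d x'"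
  unfolding Pop_def by (intro Bochner_Integration.integral_nonneg mult_nonneg_nonneg sum_nonneg Pn qn) auto

lemma diff_AE:
  assumes d1: "integrable M d1" and d2: "integrable M d2"
  shows "AE x' in M. Pop M Ph q d1 x' - Pop M Ph q d2 x' = Pop M Ph q (\<lambda>x. d1 x - d2 x) x'"
  using props(2)[OF d1] props(2)[OF d2]
proof eventually_elim
  case (elim x')
  then show ?case unfolding Pop_def
    by (subst Bochner_Integration.integral_diff[symmetric]) (auto simp: algebra_simps)
qed

lemma l1_diff:
  assumes d1: "integrable M d1" and d2: "integrable M d2"
  shows "l1norm M (\<lambda>x'. Pop M Ph q d1 x' - Pop M Ph q d2 x') \<le> l1norm M (\<lambda>x. d1 x - d2 x)"
proof -
  have dd: "integrable M (\<lambda>x. d1 x - d2 x)" using d1 d2 by simp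
  have "l1norm M (\<lambda>x'. Pop M Ph q d1 x' - Pop M Ph q d2 x') = l1norm M (Pop M Ph q (\<lambda>x. d1 x - d2 x))"
    unfolding l1norm_def
  proof (rule integral_cong_AE)
    show "(\<lambda>x'. \<bar>Pop M Ph q d1 x' - Pop M Ph q d2 x'\<bar>) \<in> borel_measurable M"
      using int[OF d1] int[OF d2] by (intro borel_measurable_abs borel_measurable_diff borel_measurable_integrable)
    show "(\<lambda>x'. \<bar>Pop M Ph q (\<lambda>x. d1 x - d2 x) x'\<bar>) \<in> borel_measurable M"
      using int[OF dd] by (intro borel_measurable_abs borel_measurable_integrable)
    show "AE x' in M. \<bar>Pop M Ph q d1 x' - Pop M Ph q d2 x'\<bar> = \<bar>Pop M Ph q (\<lambda>x. d1 x - d2 x) x'\<bar>"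
      using diff_AE[OF d1 d2] by eventually_elim simp
  qed
  also have "\<dots> \<le> l1norm M (\<lambda>x. d1 x - d2 x)" by (rule props(3)[OF dd])
  finally show ?thesis .
qed

lemma mono_AE:
  assumes d1: "integrable M d1" and d2: "integrable M d2" and le: "AE x in M. d1 x \<le> d2 x"
  shows "AE x' in M. Pop M Ph q d1 x' \<le> Pop M Ph q d2 x'"
  using props(2)[OF d1] props(2)[OF d2] AE_space
proof eventually_elim
  case (elim x')
  show ?case unfolding Pop_def
  proof (rule integral_mono_AE)
    show "AE x in M. (\<Sum>a\<in>UNIV. Ph x a x' * q x a) * d1 x \<le> (\<Sum>a\<in>UNIV. Ph x a x' * q x a) * d2 x"
      using le AE_space
    proof eventually_elim
      case (elim x)
      have "0 \<le> (\<Sum>a\<in>UNIV. Ph x a x' * q x a)"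
        using elim \<open>x' \<in> space M\<close> by (intro sum_nonneg mult_nonneg_nonneg Pn qn) auto
      then show ?case using elim by (intro mult_left_mono) auto
    qed
  qed (use elim in auto)
qed

end


lemma l1_tri:
  assumes A: "integrable M A" and B: "integrable M B" and B': "integrable M B'"
  shows "\<bar>l1norm M (\<lambda>x. A x - B' x) - l1norm M (\<lambda>x. A x - B x)\<bar> \<le> l1norm M (\<lambda>x. B' x - B x)"
proof -
  have "l1norm M (\<lambda>x. A x - B' x) \<le> (\<integral>x. \<bar>A x - B x\<bar> + \<bar>B' x - B x\<bar> \<partial>M)"
    unfolding l1norm_def using A B B' by (intro integral_mono) auto
  also have "\<dots> = l1norm M (\<lambda>x. A x - B x) + l1norm M (\<lambda>x. B' x - B x)"
    unfolding l1norm_def using A B B' by (intro Bochner_Integration.integral_add) auto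
  finally have 1: "l1norm M (\<lambda>x. A x - B' x) \<le> l1norm M (\<lambda>x. A x - B x) + l1norm M (\<lambda>x. B' x - B x)" .
  have "l1norm M (\<lambda>x. A x - B x) \<le> (\<integral>x. \<bar>A x - B' x\<bar> + \<bar>B' x - B x\<bar> \<partial>M)"
    unfolding l1norm_def using A B B' by (intro integral_mono) auto
  also have "\<dots> = l1norm M (\<lambda>x. A x - B' x) + l1norm M (\<lambda>x. B' x - B x)"
    unfolding l1norm_def using A B B' by (intro Bochner_Integration.integral_add) auto
  finally have 2: "l1norm M (\<lambda>x. A x - B x) \<le> l1norm M (\<lambda>x. A x - B' x) + l1norm M (\<lambda>x. B' x - B x)" .
  from 1 2 show ?thesis by linarith
qed

lemma min_diff_bound:
  fixes a b c1 c2 e :: real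
  assumes "0 \<le> e"
  shows "\<bar>min b (c2 * e) - min a (c1 * e)\<bar> \<le> \<bar>b - a\<bar> + \<bar>c2 - c1\<bar> * e"
proof -
  have "\<bar>c2 * e - c1 * e\<bar> = \<bar>c2 - c1\<bar> * e" using assms by (simp add: abs_mult left_diff_distrib[symmetric])
  moreover have "\<bar>min b (c2 * e) - min a (c1 * e)\<bar> \<le> \<bar>b - a\<bar> + \<bar>c2 * e - c1 * e\<bar>"
    unfolding min_def by (smt (verit))
  ultimately show ?thesis by simp
qed

theorem proposition5:
  fixes M :: "'x measure"
    and P :: "nat \<Rightarrow> 'x \<Rightarrow> 'a::finite \<Rightarrow> 'x \<Rightarrow> real"
    and pol piD :: "nat \<Rightarrow> 'x \<Rightarrow> 'a \<Rightarrow> real"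
    and d0 :: "'x \<Rightarrow> real"
    and dD :: "nat \<Rightarrow> 'x \<Rightarrow> real"
    and Ca Cx Cx' :: "nat \<Rightarrow> real"
    and H h :: nat
  assumes M: "sigma_finite_measure M"
    and P_meas: "\<And>h a. h < H \<Longrightarrow> (\<lambda>(x, x'). P h x a x') \<in> borel_measurable (M \<Otimes>\<^sub>M M)"
    and P_nonneg: "\<And>h x a x'. h < H \<Longrightarrow> x \<in> space M \<Longrightarrow> x' \<in> space M \<Longrightarrow> 0 \<le> P h x a x'"
    and P_int: "\<And>h x a. h < H \<Longrightarrow> x \<in> space M \<Longrightarrow> integrable M (P h x a)"
    and P_one: "\<And>h x a. h < H \<Longrightarrow> x \<in> space M \<Longrightarrow> (\<integral>x'. P h x a x' \<partial>M) = 1"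
    and pi_meas: "\<And>h a. h < H \<Longrightarrow> (\<lambda>x. pol h x a) \<in> borel_measurable M"
    and pi_nonneg: "\<And>h x a. h < H \<Longrightarrow> x \<in> space M \<Longrightarrow> 0 \<le> pol h x a"
    and pi_sum: "\<And>h x. h < H \<Longrightarrow> x \<in> space M \<Longrightarrow> (\<Sum>a\<in>UNIV. pol h x a) = 1"
    and piD_meas: "\<And>h a. h < H \<Longrightarrow> (\<lambda>x. piD h x a) \<in> borel_measurable M"
    and piD_nonneg: "\<And>h x a. h < H \<Longrightarrow> x \<in> space M \<Longrightarrow> 0 \<le> piD h x a"
    and piD_sum: "\<And>h x. h < H \<Longrightarrow> x \<in> space M \<Longrightarrow> (\<Sum>a\<in>UNIV. piD h x a) = 1"
    and d0_meas: "d0 \<in> borel_measurable M"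
    and d0_nonneg: "\<And>x. x \<in> space M \<Longrightarrow> 0 \<le> d0 x"
    and d0_int: "integrable M d0"
    and d0_one: "(\<integral>x. d0 x \<partial>M) = 1"
    and dD_meas: "\<And>h. h < H \<Longrightarrow> dD h \<in> borel_measurable M"
    and dD_nonneg: "\<And>h x. h < H \<Longrightarrow> x \<in> space M \<Longrightarrow> 0 \<le> dD h x"
    and dD_int: "\<And>h. h < H \<Longrightarrow> integrable M (dD h)"
    and dD_one: "\<And>h. h < H \<Longrightarrow> (\<integral>x. dD h x \<partial>M) = 1"
    and Ca_nonneg: "\<And>h. 0 \<le> Ca h"
    and Cx_nonneg: "\<And>h. 0 \<le> Cx h"
    and Cx'_nonneg: "\<And>h. 0 \<le> Cx' h"
    and h: "h < H"
  shows "((\<forall>h'<h. Cx h' \<le> Cx' h') \<longrightarrow>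
            (AE x in M. dbar M P (pseudo_policy pol piD Ca) d0 dD Cx h x
                        \<le> dbar M P (pseudo_policy pol piD Ca) d0 dD Cx' h x))
       \<and> ((\<forall>h'<h. Cx h' \<ge> Cx' h') \<longrightarrow>
            (AE x in M. dbar M P (pseudo_policy pol piD Ca) d0 dD Cx h x
                        \<ge> dbar M P (pseudo_policy pol piD Ca) d0 dD Cx' h x))
       \<and> l1norm M (\<lambda>x. dbar M P (pseudo_policy pol piD Ca) d0 dD Cx' h x
                       - dbar M P (pseudo_policy pol piD Ca) d0 dD Cx h x)
           \<le> (\<Sum>h'<h. \<bar>Cx' h' - Cx h'\<bar>)
       \<and> \<bar>l1norm M (\<lambda>x. dpi M P pol d0 h x - dbar M P (pseudo_policy pol piD Ca) d0 dD Cx' h x)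
          - l1norm M (\<lambda>x. dpi M P pol d0 h x - dbar M P (pseudo_policy pol piD Ca) d0 dD Cx h x)\<bar>
           \<le> (\<Sum>h'<h. \<bar>Cx' h' - Cx h'\<bar>)"
proof -
  let ?pb = "pseudo_policy pol piD Ca"
  have kpol: "kern M (P k) (pol k)" if k: "k < H" for k
  proof (rule kern.intro)
    show "sigma_finite_measure M" by (rule M)
    show "\<And>a. (\<lambda>(x, x'). P k x a x') \<in> borel_measurable (M \<Otimes>\<^sub>M M)" by (rule P_meas[OF k])
    show "\<And>x a x'. x \<in> space M \<Longrightarrow> x' \<in> space M \<Longrightarrow> 0 \<le> P k x a x'" by (rule P_nonneg[OF k])
    show "\<And>x a. x \<in> space M \<Longrightarrow> integrable M (P k x a)" by (rule P_int[OF k])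
    show "\<And>x a. x \<in> space M \<Longrightarrow> (\<integral>x'. P k x a x' \<partial>M) = 1" by (rule P_one[OF k])
    show "\<And>a. (\<lambda>x. pol k x a) \<in> borel_measurable M" by (rule pi_meas[OF k])
    show "\<And>x a. x \<in> space M \<Longrightarrow> 0 \<le> pol k x a" by (rule pi_nonneg[OF k])
    show "\<And>x. x \<in> space M \<Longrightarrow> (\<Sum>a\<in>UNIV. pol k x a) \<le> 1" using pi_sum[OF k] by simp
  qed
  have kpb: "kern M (P k) (?pb k)" if k: "k < H" for k
  proof (rule kern.intro)
    show "sigma_finite_measure M" by (rule M)
    show "\<And>a. (\<lambda>(x, x'). P k x a x') \<in> borel_measurable (M \<Otimes>\<^sub>M M)" by (rule P_meas[OF k])
    show "\<And>x a x'. x \<in> space M \<Longrightarrow> x' \<in> space M \<Longrightarrow> 0 \<le> P k x a x'" by (rule P_nonneg[OF k])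
    show "\<And>x a. x \<in> space M \<Longrightarrow> integrable M (P k x a)" by (rule P_int[OF k])
    show "\<And>x a. x \<in> space M \<Longrightarrow> (\<integral>x'. P k x a x' \<partial>M) = 1" by (rule P_one[OF k])
    show "\<And>a. (\<lambda>x. ?pb k x a) \<in> borel_measurable M"
      unfolding pseudo_policy_def using pi_meas[OF k] piD_meas[OF k] by measurable
    show "\<And>x a. x \<in> space M \<Longrightarrow> 0 \<le> ?pb k x a"
      unfolding pseudo_policy_def using pi_nonneg[OF k] piD_nonneg[OF k] Ca_nonneg by simp
    show "\<And>x. x \<in> space M \<Longrightarrow> (\<Sum>a\<in>UNIV. ?pb k x a) \<le> 1"
    proof -
      fix x assume x: "x \<in> space M"
      have "(\<Sum>a\<in>UNIV. ?pb k x a) \<le> (\<Sum>a\<in>UNIV. pol k x a)"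
        unfolding pseudo_policy_def by (intro sum_mono) simp
      then show "(\<Sum>a\<in>UNIV. ?pb k x a) \<le> 1" using pi_sum[OF k x] by simp
    qed
  qed
  have dbar_int: "integrable M (dbar M P ?pb d0 dD C k) \<and> (\<forall>x\<in>space M. 0 \<le> dbar M P ?pb d0 dD C k x)"
    if "k \<le> H" "\<And>j. 0 \<le> C j" for C k
    using that(1)
  proof (induction k)
    case 0 show ?case using d0_int d0_nonneg by simp
  next
    case (Suc k)
    then have k: "k < H" by simp
    interpret K: kern M "P k" "?pb k" by (rule kpb[OF k])
    from Suc.IH k have IH1: "integrable M (dbar M P ?pb d0 dD C k)"
      and IH2: "\<forall>x\<in>space M. 0 \<le> dbar M P ?pb d0 dD C k x" by auto
    have mi: "integrable M (\<lambda>x. min (dbar M P ?pb d0 dD C k x) (C k * dD k x))"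
    proof (rule Bochner_Integration.integrable_bound[OF IH1])
      show "(\<lambda>x. min (dbar M P ?pb d0 dD C k x) (C k * dD k x)) \<in> borel_measurable M"
        using borel_measurable_integrable[OF IH1] dD_meas[OF k] by measurable
      show "AE x in M. norm (min (dbar M P ?pb d0 dD C k x) (C k * dD k x)) \<le> norm (dbar M P ?pb d0 dD C k x)"
        using IH2 dD_nonneg[OF k] that(2)[of k] by (intro AE_I2) auto
    qed
    have mn: "\<And>x. x \<in> space M \<Longrightarrow> 0 \<le> min (dbar M P ?pb d0 dD C k x) (C k * dD k x)"
      using IH2 dD_nonneg[OF k] that(2)[of k] by auto
    show ?case using K.int[OF mi] K.nonneg[OF mn] by simp
  qed
  have dpi_int: "integrable M (dpi M P pol d0 k)" if "k \<le> H" for k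
    using that
  proof (induction k)
    case 0 show ?case using d0_int by simp
  next
    case (Suc k)
    then have k: "k < H" by simp
    interpret K: kern M "P k" "pol k" by (rule kpol[OF k])
    show ?case using K.int Suc k by simp
  qed
  have mint: "integrable M (\<lambda>x. min (dbar M P ?pb d0 dD C k x) (C k * dD k x))"
    if k: "k < H" and C: "\<And>j. 0 \<le> C j" for C k
  proof -
    from dbar_int[of k C] k C have IH1: "integrable M (dbar M P ?pb d0 dD C k)"
      and IH2: "\<forall>x\<in>space M. 0 \<le> dbar M P ?pb d0 dD C k x" by auto
    show ?thesis
    proof (rule Bochner_Integration.integrable_bound[OF IH1])
      show "(\<lambda>x. min (dbar M P ?pb d0 dD C k x) (C k * dD k x)) \<in> borel_measurable M"
        using borel_measurable_integrable[OF IH1] dD_meas[OF k] by measurable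
      show "AE x in M. norm (min (dbar M P ?pb d0 dD C k x) (C k * dD k x)) \<le> norm (dbar M P ?pb d0 dD C k x)"
        using IH2 dD_nonneg[OF k] C[of k] by (intro AE_I2) auto
    qed
  qed
  have mono: "AE x in M. dbar M P ?pb d0 dD C1 k x \<le> dbar M P ?pb d0 dD C2 k x"
    if "k \<le> H" "\<And>j. 0 \<le> C1 j" "\<And>j. 0 \<le> C2 j" "\<forall>j<k. C1 j \<le> C2 j" for C1 C2 k
    using that(1,4)
  proof (induction k)
    case 0 show ?case by simp
  next
    case (Suc k)
    then have k: "k < H" by simp
    interpret K: kern M "P k" "?pb k" by (rule kpb[OF k])
    from Suc have IH: "AE x in M. dbar M P ?pb d0 dD C1 k x \<le> dbar M P ?pb d0 dD C2 k x" by auto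
    have ck: "C1 k \<le> C2 k" using Suc by auto
    have "AE x in M. min (dbar M P ?pb d0 dD C1 k x) (C1 k * dD k x) \<le> min (dbar M P ?pb d0 dD C2 k x) (C2 k * dD k x)"
      using IH AE_space
    proof eventually_elim
      case (elim x)
      have "C1 k * dD k x \<le> C2 k * dD k x" using ck dD_nonneg[OF k elim(2)] by (rule mult_right_mono)
      then show ?case using elim(1) by linarith
    qed
    then show ?case using K.mono_AE[OF mint[OF k that(2)] mint[OF k that(3)]] by simp
  qed
  have l1: "l1norm M (\<lambda>x. dbar M P ?pb d0 dD C2 k x - dbar M P ?pb d0 dD C1 k x) \<le> (\<Sum>j<k. \<bar>C2 j - C1 j\<bar>)"
    if "k \<le> H" "\<And>j. 0 \<le> C1 j" "\<And>j. 0 \<le> C2 j" for C1 C2 k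
    using that(1)
  proof (induction k)
    case 0 show ?case by (simp add: l1norm_def)
  next
    case (Suc k)
    then have k: "k < H" by simp
    interpret K: kern M "P k" "?pb k" by (rule kpb[OF k])
    from Suc have IH: "l1norm M (\<lambda>x. dbar M P ?pb d0 dD C2 k x - dbar M P ?pb d0 dD C1 k x) \<le> (\<Sum>j<k. \<bar>C2 j - C1 j\<bar>)" by auto
    have i1: "integrable M (dbar M P ?pb d0 dD C1 k)" using dbar_int[of k C1] k that(2) by auto
    have i2: "integrable M (dbar M P ?pb d0 dD C2 k)" using dbar_int[of k C2] k that(3) by auto
    note m1 = mint[OF k that(2)] and m2 = mint[OF k that(3)]
    have "l1norm M (\<lambda>x. dbar M P ?pb d0 dD C2 (Suc k) x - dbar M P ?pb d0 dD C1 (Suc k) x)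
        \<le> l1norm M (\<lambda>x. min (dbar M P ?pb d0 dD C2 k x) (C2 k * dD k x) - min (dbar M P ?pb d0 dD C1 k x) (C1 k * dD k x))"
      using K.l1_diff[OF m2 m1] by simp
    also have "\<dots> \<le> (\<integral>x. \<bar>dbar M P ?pb d0 dD C2 k x - dbar M P ?pb d0 dD C1 k x\<bar> + \<bar>C2 k - C1 k\<bar> * dD k x \<partial>M)"
      unfolding l1norm_def
    proof (rule integral_mono)
      show "integrable M (\<lambda>x. \<bar>min (dbar M P ?pb d0 dD C2 k x) (C2 k * dD k x) - min (dbar M P ?pb d0 dD C1 k x) (C1 k * dD k x)\<bar>)"
        using m1 m2 by (intro integrable_abs Bochner_Integration.integrable_diff)
      show "integrable M (\<lambda>x. \<bar>dbar M P ?pb d0 dD C2 k x - dbar M P ?pb d0 dD C1 k x\<bar> + \<bar>C2 k - C1 k\<bar> * dD k x)"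
        using i1 i2 dD_int[OF k] by (intro Bochner_Integration.integrable_add integrable_abs Bochner_Integration.integrable_diff integrable_mult_right)
      fix x assume x: "x \<in> space M"
      show "\<bar>min (dbar M P ?pb d0 dD C2 k x) (C2 k * dD k x) - min (dbar M P ?pb d0 dD C1 k x) (C1 k * dD k x)\<bar>
          \<le> \<bar>dbar M P ?pb d0 dD C2 k x - dbar M P ?pb d0 dD C1 k x\<bar> + \<bar>C2 k - C1 k\<bar> * dD k x"
        by (rule min_diff_bound) (rule dD_nonneg[OF k x])
    qed
    also have "\<dots> = l1norm M (\<lambda>x. dbar M P ?pb d0 dD C2 k x - dbar M P ?pb d0 dD C1 k x) + \<bar>C2 k - C1 k\<bar> * (\<integral>x. dD k x \<partial>M)"
      unfolding l1norm_def using i1 i2 dD_int[OF k]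
      by (subst Bochner_Integration.integral_add) (auto intro!: integrable_abs Bochner_Integration.integrable_diff)
    also have "\<dots> \<le> (\<Sum>j<Suc k. \<bar>C2 j - C1 j\<bar>)" using IH dD_one[OF k] by simp
    finally show ?case .
  qed
  show ?thesis
  proof (intro conjI impI)
    show "AE x in M. dbar M P ?pb d0 dD Cx h x \<le> dbar M P ?pb d0 dD Cx' h x" if "\<forall>h'<h. Cx h' \<le> Cx' h'"
      using mono[of h Cx Cx'] that h Cx_nonneg Cx'_nonneg by auto
    show "AE x in M. dbar M P ?pb d0 dD Cx h x \<ge> dbar M P ?pb d0 dD Cx' h x" if "\<forall>h'<h. Cx h' \<ge> Cx' h'"
      using mono[of h Cx' Cx] that h Cx_nonneg Cx'_nonneg by auto
    show l: "l1norm M (\<lambda>x. dbar M P ?pb d0 dD Cx' h x - dbar M P ?pb d0 dD Cx h x) \<le> (\<Sum>h'<h. \<bar>Cx' h' - Cx h'\<bar>)"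
      using l1[of h Cx Cx'] h Cx_nonneg Cx'_nonneg by auto
    have "\<bar>l1norm M (\<lambda>x. dpi M P pol d0 h x - dbar M P ?pb d0 dD Cx' h x)
          - l1norm M (\<lambda>x. dpi M P pol d0 h x - dbar M P ?pb d0 dD Cx h x)\<bar>
        \<le> l1norm M (\<lambda>x. dbar M P ?pb d0 dD Cx' h x - dbar M P ?pb d0 dD Cx h x)"
      using h Cx_nonneg Cx'_nonneg dbar_int[of h Cx] dbar_int[of h Cx'] dpi_int[of h]
      by (intro l1_tri) auto
    then show "\<bar>l1norm M (\<lambda>x. dpi M P pol d0 h x - dbar M P ?pb d0 dD Cx' h x)
          - l1norm M (\<lambda>x. dpi M P pol d0 h x - dbar M P ?pb d0 dD Cx h x)\<bar>
        \<le> (\<Sum>h'<h. \<bar>Cx' h' - Cx h'\<bar>)" using l by linarith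
  qed
qed

end
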